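(* Let $3\le n\le k$ be integers, $\mu>0$ and $q\in[0,1]$, and let $X$ be the discrete-time Markov chain on $\mathbb{N}^{n-1}$ described in the context. If $X$ is stable with stationary distribution $\pi$, then the capacity $$C:=q\mu\,(k-(n-1))\sum_{\mathbf{x}\in R_0}\pi(\mathbf{x})$$ equals $C=\dfrac{q\mu k}{n}$.
   Context: $\mathbb{N}=\{0,1,2,\dots\}$. Vectors have dimension $n-1$; $\mathbf{0}$, $\mathbf{1}$ are the all-zero and all-one vectors, $\mathbf{e}_l$ the $l$-th unit vector. For $j=0,\dots,n-1$, $R_j$ is the set of $\mathbf{x}\in\mathbb{N}^{n-1}$ with exactly $j$ zero entries (so $R_0=\{\mathbf{x}:x_i\ge1\ \forall i\}$, $R_{n-1}=\{\mathbf{0}\}$). $X$ is the Markov chain on $\mathbb{N}^{n-1}$ with nonzero transition probabilities: from $\mathbf{x}\in R_0$, to $\mathbf{x}-\mathbf{1}$ w.p. $\frac{k-(n-1)}{k}$ and to $\mathbf{x}+\mathbf{e}_l$ w.p. $\frac1k$ ($l=1,\dots,n-1$); from $\mathbf{x}\in R_j$, $1\le j\le n-2$, to $\mathbf{x}+\mathbf{e}_l$ w.p. $\frac{k-(n-1-j)}{kj}$ if $x_l=0$ and w.p. $\frac1k$ if $x_l\ge1$; from $\mathbf{0}$ to $\mathbf{e}_l$ w.p. $\frac1{n-1}$. It is the uniformization at rate $k\mu$ of a continuous-time chain modelling a switch with $k$ identical links each generating Bell pairs at rate $\mu$, which performs an $n$-party swap (succeeding w.p. $q$) when $n$ distinct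 links hold pairs. Stable means positive recurrent. *)

theory Defs
  imports "HOL-Analysis.Analysis"
begin

text \<open>States: vectors in N^(n-1), represented as functions nat => nat that vanish
  at every index >= n-1 (coordinates are indexed 0..n-2).\<close>

definition states :: "nat \<Rightarrow> (nat \<Rightarrow> nat) set" where
  "states n = {x. \<forall>i. n - 1 \<le> i \<longrightarrow> x i = 0}"

definition nzeros :: "nat \<Rightarrow> (nat \<Rightarrow> nat) \<Rightarrow> nat" where
  "nzeros n x = card {i. i < n - 1 \<and> x i = 0}"

definition region :: "nat \<Rightarrow> nat \<Rightarrow> (nat \<Rightarrow> nat) set" where
  "region n j = {x \<in> states n. nzeros n x = j}"

definition unitvec :: "nat \<Rightarrow> nat \<Rightarrow> nat" where
  "unitvec l = (\<lambda>i. if i = l then 1 else 0)"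

definition trans_prob :: "nat \<Rightarrow> nat \<Rightarrow> (nat \<Rightarrow> nat) \<Rightarrow> (nat \<Rightarrow> nat) \<Rightarrow> real" where
  "trans_prob n k x y =
    (if x \<notin> states n \<or> y \<notin> states n then 0
     else if nzeros n x = 0 then
       (if y = (\<lambda>i. x i - 1) then (real k - (real n - 1)) / real k else 0)
       + (\<Sum>l<n - 1. if y = (\<lambda>i. x i + unitvec l i) then 1 / real k else 0)
     else if nzeros n x = n - 1 then
       (\<Sum>l<n - 1. if y = unitvec l then 1 / (real n - 1) else 0)
     else
       (\<Sum>l<n - 1. if y = (\<lambda>i. x i + unitvec l i) then
          (if x l = 0
           then (real k - (real n - 1 - real (nzeros n x))) / (real k * real (nzeros n x))
           else 1 / real k)
        else 0))"

text \<open>Probability, starting from z, that the first visit to x0 (at a time >= 1)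
  happens at step Suc m.\<close>
fun first_hit :: "nat \<Rightarrow> nat \<Rightarrow> (nat \<Rightarrow> nat) \<Rightarrow> nat \<Rightarrow> (nat \<Rightarrow> nat) \<Rightarrow> real" where
  "first_hit n k x0 0 z = trans_prob n k z x0"
| "first_hit n k x0 (Suc m) z =
     infsum (\<lambda>w. trans_prob n k z w * first_hit n k x0 m w) (states n - {x0})"

text \<open>A state is positive recurrent if the return time is a.s. finite and has
  finite mean; the chain is positive recurrent (chain_stable) if all states are.\<close>
definition pos_recurrent_state :: "nat \<Rightarrow> nat \<Rightarrow> (nat \<Rightarrow> nat) \<Rightarrow> bool" where
  "pos_recurrent_state n k x0 \<longleftrightarrow>
     (\<lambda>m. first_hit n k x0 m x0) sums 1 \<and>
     summable (\<lambda>m. real (Suc m) * first_hit n k x0 m x0)"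

definition chain_stable :: "nat \<Rightarrow> nat \<Rightarrow> bool" where
  "chain_stable n k \<longleftrightarrow> (\<forall>x \<in> states n. pos_recurrent_state n k x)"

definition stationary :: "nat \<Rightarrow> nat \<Rightarrow> ((nat \<Rightarrow> nat) \<Rightarrow> real) \<Rightarrow> bool" where
  "stationary n k \<pi> \<longleftrightarrow>
     (\<forall>x. \<pi> x \<ge> 0) \<and> (\<forall>x. x \<notin> states n \<longrightarrow> \<pi> x = 0) \<and>
     (\<pi> has_sum 1) (states n) \<and>
     (\<forall>y \<in> states n. ((\<lambda>x. \<pi> x * trans_prob n k x y) has_sum \<pi> y) (states n))"

end

theory Submission
  imports Defs
begin

definition Ssum :: "nat \<Rightarrow> (nat \<Rightarrow> nat) \<Rightarrow> nat" where
  "Ssum n x = (\<Sum>i<n-1. x i)"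

lemma has_sum_sum_fin:
  fixes f :: "'i \<Rightarrow> 'a \<Rightarrow> real"
  assumes "finite I" "\<And>i. i \<in> I \<Longrightarrow> (f i has_sum s i) A"
  shows "((\<lambda>x. \<Sum>i\<in>I. f i x) has_sum (\<Sum>i\<in>I. s i)) A"
  using assms
proof (induction I rule: finite_induct)
  case empty then show ?case by simp
next
  case (insert a I)
  have "((\<lambda>x. f a x + (\<Sum>i\<in>I. f i x)) has_sum (s a + (\<Sum>i\<in>I. s i))) A"
    using insert by (intro has_sum_add) auto
  then show ?case using insert by simp
qed

lemma finite_A: "finite {y \<in> states n. Ssum n y \<le> j}"
proof -
  let ?d = "n - 1"
  have inj: "inj_on (\<lambda>y. map y [0..<?d]) (states n)"
  proof (rule inj_onI)
    fix x y assume x: "x \<in> states n" and y: "y \<in> states n" and e: "map x [0..<?d] = map y [0..<?d]"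
    show "x = y"
    proof
      fix i show "x i = y i"
      proof (cases "i < ?d")
        case True then show ?thesis using e by (metis (no_types) diff_zero length_upt nth_map nth_upt add_0 length_map)
      next
        case False then show ?thesis using x y by (auto simp: states_def)
      qed
    qed
  qed
  have sub: "(\<lambda>y. map y [0..<?d]) ` {y \<in> states n. Ssum n y \<le> j} \<subseteq> {xs. set xs \<subseteq> {0..j} \<and> length xs = ?d}"
  proof -
    have "y i \<le> j" if "y \<in> states n" "Ssum n y \<le> j" "i < n - 1" for y i
    proof -
      have "y i \<le> Ssum n y" unfolding Ssum_def using that member_le_sum[of i "{..<n-1}" y] by auto
      then show ?thesis using that by linarith
    qed
    then show ?thesis by (auto simp: atLeastAtMost_iff)
  qed
  have "finite {xs. set xs \<subseteq> {0..j} \<and> length xs = ?d}" by (rule finite_lists_length_eq) simp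
  then have "finite ((\<lambda>y. map y [0..<?d]) ` {y \<in> states n. Ssum n y \<le> j})" using sub finite_subset by blast
  moreover have "inj_on (\<lambda>y. map y [0..<?d]) {y \<in> states n. Ssum n y \<le> j}" using inj by (rule inj_on_subset) auto
  ultimately show ?thesis by (rule finite_imageD)
qed

lemma sum_ind_swap:
  fixes g :: "nat \<Rightarrow> 'a" and a :: "nat \<Rightarrow> real"
  assumes "finite A"
  shows "(\<Sum>y\<in>A. \<Sum>l<m. if y = g l then a l else 0) = (\<Sum>l<m. if g l \<in> A then a l else 0)"
proof -
  have "(\<Sum>y\<in>A. \<Sum>l<m. if y = g l then a l else 0) = (\<Sum>l<m. \<Sum>y\<in>A. if y = g l then a l else 0)"
    by (rule sum.swap)
  also have "\<dots> = (\<Sum>l<m. if g l \<in> A then a l else 0)"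
    using assms by simp
  finally show ?thesis .
qed

lemma sumP:
  assumes x: "x \<in> states n" and A: "finite A" "A \<subseteq> states n"
  shows "(\<Sum>y\<in>A. trans_prob n k x y) =
    (if nzeros n x = 0 then
       (if (\<lambda>i. x i - 1) \<in> A then (real k - (real n - 1)) / real k else 0)
       + (\<Sum>l<n - 1. if (\<lambda>i. x i + unitvec l i) \<in> A then 1 / real k else 0)
     else if nzeros n x = n - 1 then
       (\<Sum>l<n - 1. if unitvec l \<in> A then 1 / (real n - 1) else 0)
     else
       (\<Sum>l<n - 1. if (\<lambda>i. x i + unitvec l i) \<in> A then
          (if x l = 0
           then (real k - (real n - 1 - real (nzeros n x))) / (real k * real (nzeros n x))
           else 1 / real k)
        else 0))"
proof -
  have e: "(\<Sum>y\<in>A. trans_prob n k x y) = (\<Sum>y\<in>A.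
    (if nzeros n x = 0 then
       (if y = (\<lambda>i. x i - 1) then (real k - (real n - 1)) / real k else 0)
       + (\<Sum>l<n - 1. if y = (\<lambda>i. x i + unitvec l i) then 1 / real k else 0)
     else if nzeros n x = n - 1 then
       (\<Sum>l<n - 1. if y = unitvec l then 1 / (real n - 1) else 0)
     else
       (\<Sum>l<n - 1. if y = (\<lambda>i. x i + unitvec l i) then
          (if x l = 0
           then (real k - (real n - 1 - real (nzeros n x))) / (real k * real (nzeros n x))
           else 1 / real k)
        else 0)))"
    using x A by (intro sum.cong) (auto simp: trans_prob_def)
  show ?thesis unfolding e
    using A(1) by (simp add: sum.distrib sum_ind_swap[OF A(1)])
qed

lemma nz_fin: "finite {i. i < (n::nat) - 1 \<and> (x::nat\<Rightarrow>nat) i = 0}"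
  by (rule finite_subset[of _ "{..<n-1}"]) auto

lemma nz0: "nzeros n x = 0 \<Longrightarrow> i < n - 1 \<Longrightarrow> x i \<noteq> 0"
  unfolding nzeros_def using nz_fin[of n x] by (auto simp: card_eq_0_iff)

lemma nzd: "nzeros n x = n - 1 \<Longrightarrow> i < n - 1 \<Longrightarrow> x i = 0"
proof -
  assume a: "nzeros n x = n - 1" "i < n - 1"
  have "{i. i < n - 1 \<and> x i = 0} = {..<n-1}"
    by (rule card_subset_eq) (use a in \<open>auto simp: nzeros_def\<close>)
  then show ?thesis using a by auto
qed

lemma nz_le: "nzeros n x \<le> n - 1"
  unfolding nzeros_def by (rule order.trans[OF card_mono[of "{..<n-1}"]]) auto

lemma states_dn: "x \<in> states n \<Longrightarrow> (\<lambda>i. x i - 1) \<in> states n"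
  by (auto simp: states_def)
lemma states_up: "x \<in> states n \<Longrightarrow> l < n - 1 \<Longrightarrow> (\<lambda>i. x i + unitvec l i) \<in> states n"
  by (auto simp: states_def unitvec_def)
lemma states_unit: "l < n - 1 \<Longrightarrow> unitvec l \<in> states n"
  by (auto simp: states_def unitvec_def)

lemma Ssum_up: "l < n - 1 \<Longrightarrow> Ssum n (\<lambda>i. x i + unitvec l i) = Ssum n x + 1"
  by (simp add: Ssum_def sum.distrib unitvec_def)
lemma Ssum_unit: "l < n - 1 \<Longrightarrow> Ssum n (unitvec l) = 1"
  by (simp add: Ssum_def unitvec_def)
lemma Ssum_dn: "nzeros n x = 0 \<Longrightarrow> Ssum n (\<lambda>i. x i - 1) = Ssum n x - (n - 1) \<and> n - 1 \<le> Ssum n x"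
proof -
  assume a: "nzeros n x = 0"
  have ge: "\<And>i. i \<in> {..<n-1} \<Longrightarrow> 1 \<le> x i" using nz0[OF a] by (simp add: Suc_le_eq)
  have "Ssum n (\<lambda>i. x i - 1) = Ssum n x - (\<Sum>i<n-1. 1)"
    unfolding Ssum_def by (rule sum_subtractf_nat) (use ge in auto)
  moreover have "(\<Sum>i<n-1. (1::nat)) \<le> Ssum n x" unfolding Ssum_def by (rule sum_mono) (use ge in auto)
  ultimately show ?thesis by simp
qed
lemma Ssum_zero: "nzeros n x = n - 1 \<Longrightarrow> Ssum n x = 0"
  using nzd[of n x] by (simp add: Ssum_def)

lemma coef_sum:
  assumes "n \<ge> 1" "k \<ge> n" "nzeros n x \<noteq> 0"
  shows "(\<Sum>l<n - 1. (if x l = 0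
           then (real k - (real n - 1 - real (nzeros n x))) / (real k * real (nzeros n x))
           else 1 / real k)) = 1"
proof -
  define z where "z = nzeros n x"
  define Z where "Z = {i. i < n - 1 \<and> x i = 0}"
  have cz: "card Z = z" by (simp add: Z_def z_def nzeros_def)
  have ZZ: "{..<n-1} \<inter> {l. x l = 0} = Z" by (auto simp: Z_def)
  have ZC: "{..<n-1} \<inter> - {l. x l = 0} = {..<n-1} - Z" by (auto simp: Z_def)
  have cZC: "card ({..<n-1} - Z) = n - 1 - z"
    using cz by (subst card_Diff_subset) (auto simp: Z_def)
  have zle: "z \<le> n - 1" using nz_le z_def by simp
  have z0: "z > 0" using assms z_def by simp
  have k0: "real k > 0" using assms by simp
  have "(\<Sum>l<n - 1. (if x l = 0
           then (real k - (real n - 1 - real z)) / (real k * real z)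
           else 1 / real k)) = real z * ((real k - (real n - 1 - real z)) / (real k * real z)) + real (n - 1 - z) * (1 / real k)"
    using sum.If_cases[of "{..<n-1}" "\<lambda>l. x l = 0" "\<lambda>_. (real k - (real n - 1 - real z)) / (real k * real z)" "\<lambda>_. 1 / real k"]
    unfolding ZZ ZC cZC[symmetric] by (simp add: cz)
  also have "\<dots> = 1"
    using z0 k0 zle assms(1) by (simp add: field_simps of_nat_diff)
  finally show ?thesis unfolding z_def .
qed

lemma PA:
  assumes n: "3 \<le> n" and k: "n \<le> k" and x: "x \<in> states n"
  shows "(\<Sum>y\<in>{y \<in> states n. Ssum n y \<le> j}. trans_prob n k x y) =
    of_bool (Ssum n x < j) + (real k - (real n - 1)) / real k * of_bool (nzeros n x = 0 \<and> j \<le> Ssum n x \<and> Ssum n x \<le> j + (n - 1))"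
proof -
  let ?A = "{y \<in> states n. Ssum n y \<le> j}"
  have k0: "real k > 0" using n k by simp
  have sub: "?A \<subseteq> states n" by blast
  note base = sumP[OF x finite_A[of n j] sub, of k]
  consider "nzeros n x = 0" | "nzeros n x = n - 1" | "nzeros n x \<noteq> 0" "nzeros n x \<noteq> n - 1" by blast
  then show ?thesis
  proof cases
    case 1
    have up: "(\<Sum>l<n - 1. if (\<lambda>i. x i + unitvec l i) \<in> ?A then 1 / real k else 0) = of_bool (Ssum n x < j) * (real n - 1) / real k"
    proof -
      have "(\<Sum>l<n - 1. if (\<lambda>i. x i + unitvec l i) \<in> ?A then 1 / real k else 0) = (\<Sum>l<n - 1. of_bool (Ssum n x < j) / real k)"
        by (rule sum.cong) (use x in \<open>auto simp: states_up Ssum_up\<close>)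
      then show ?thesis using n by (simp add: of_nat_diff)
    qed
    have dn: "((\<lambda>i. x i - 1) \<in> ?A) = (Ssum n x \<le> j + (n - 1))"
      using Ssum_dn[OF 1] states_dn[OF x] by auto
    have ge: "n - 1 \<le> Ssum n x" using Ssum_dn[OF 1] by simp
    have "(\<Sum>y\<in>?A. trans_prob n k x y) = (if Ssum n x \<le> j + (n - 1) then (real k - (real n - 1)) / real k else 0) + of_bool (Ssum n x < j) * (real n - 1) / real k"
      unfolding base up dn using 1 by simp
    moreover have "(real k - (real n - 1)) / real k + of_bool True * (real n - 1) / real k = 1"
      using k0 by (simp add: field_simps)
    ultimately show ?thesis using 1 ge
      by (cases "Ssum n x < j") auto
  next
    case 2
    have "(\<Sum>l<n - 1. if unitvec l \<in> ?A then 1 / (real n - 1) else 0) = (\<Sum>l<n - 1. of_bool (0 < j) / (real n - 1))"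
      by (rule sum.cong) (auto simp: states_unit Ssum_unit)
    then show ?thesis unfolding base using 2 n Ssum_zero[OF 2] by (simp add: of_nat_diff)
  next
    case 3
    have "(\<Sum>l<n - 1. if (\<lambda>i. x i + unitvec l i) \<in> ?A then
          (if x l = 0
           then (real k - (real n - 1 - real (nzeros n x))) / (real k * real (nzeros n x))
           else 1 / real k)
        else 0) = of_bool (Ssum n x < j) * (\<Sum>l<n - 1. (if x l = 0
           then (real k - (real n - 1 - real (nzeros n x))) / (real k * real (nzeros n x))
           else 1 / real k))"
      unfolding sum_distrib_left
      by (rule sum.cong) (use x in \<open>auto simp: states_up Ssum_up\<close>)
    then show ?thesis unfolding base using 3 coef_sum[of n k x] n k by simp
  qed
qed

lemma sum_ofbool_eq: "(\<Sum>j<M. (of_bool (s = j) :: real)) = of_bool (s < M)" for s M :: nat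
proof -
  have "(\<Sum>j<M. (of_bool (s = j) :: real)) = of_nat (card ({..<M} \<inter> {j. s = j}))"
    by (rule sum_of_bool_eq) simp_all
  moreover have "{..<M} \<inter> {j. s = j} = (if s < M then {s} else {})" by auto
  ultimately show ?thesis by simp
qed

definition wM :: "nat \<Rightarrow> nat \<Rightarrow> nat \<Rightarrow> nat" where
  "wM d M s = card {j. j < M \<and> j \<le> s \<and> s \<le> j + d}"

lemma sum_ofbool_w: "(\<Sum>j<M. (of_bool (R \<and> j \<le> s \<and> s \<le> j + d) :: real)) = of_bool R * real (wM d M s)" for s M d :: nat
proof -
  have "(\<Sum>j<M. (of_bool (R \<and> j \<le> s \<and> s \<le> j + d) :: real)) = real (card ({..<M} \<inter> {j. R \<and> j \<le> s \<and> s \<le> j + d}))"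
    by simp
  moreover have "{..<M} \<inter> {j. R \<and> j \<le> s \<and> s \<le> j + d} = (if R then {j. j < M \<and> j \<le> s \<and> s \<le> j + d} else {})"
    by auto
  ultimately show ?thesis by (simp add: wM_def)
qed

lemma wM_le: "wM d M s \<le> Suc d"
proof -
  have "{j. j < M \<and> j \<le> s \<and> s \<le> j + d} \<subseteq> {s - d..s}" by auto
  then have "wM d M s \<le> card {s - d..s}" unfolding wM_def by (intro card_mono) auto
  then show ?thesis by simp
qed

lemma wM_eq: "d \<le> s \<Longrightarrow> s < M \<Longrightarrow> wM d M s = Suc d"
proof -
  assume a: "d \<le> s" "s < M"
  have "{j. j < M \<and> j \<le> s \<and> s \<le> j + d} = {s - d..s}" using a by auto
  then show ?thesis using a unfolding wM_def by simp
qed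

lemma aux_contra: "(a::real) * (1 - t) \<le> (a * p - 1) / 2 \<Longrightarrow> a * p - t \<le> a * (1 - t) \<Longrightarrow> t \<le> 1 \<Longrightarrow> 1 < a * p \<Longrightarrow> False"
proof -
  assume h: "(a::real) * (1 - t) \<le> (a * p - 1) / 2" "a * p - t \<le> a * (1 - t)" "t \<le> 1" "1 < a * p"
  have "a * p - 1 \<le> a * p - t" using h(3) by simp
  also have "\<dots> \<le> (a * p - 1) / 2" using h(1,2) by (rule order_trans[rotated])
  finally show False using h(4) by simp
qed

theorem proposition5p1:
  fixes n k :: nat and \<mu> q :: real and \<pi> :: "(nat \<Rightarrow> nat) \<Rightarrow> real"
  assumes "3 \<le> n" and "n \<le> k" and "\<mu> > 0" and "0 \<le> q" and "q \<le> 1"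
    and "chain_stable n k" and "stationary n k \<pi>"
  shows "q * \<mu> * (real k - (real n - 1)) * infsum \<pi> (region n 0) = q * \<mu> * real k / real n"
proof -
  note n = assms(1) and k = assms(2)
  define c where "c = (real k - (real n - 1)) / real k"
  define d where "d = n - 1"
  define S where "S = Ssum n"
  define R where "R = (\<lambda>x. nzeros n x = 0)"
  define A where "A = (\<lambda>j. {y \<in> states n. Ssum n y \<le> j})"
  define B where "B = (\<lambda>M. {y \<in> states n. Ssum n y < M})"
  define p where "p = infsum \<pi> (region n 0)"
  define T where "T = (\<lambda>M. sum \<pi> (B M))"
  have k0: "real k > 0" using n k by simp
  have c0: "c > 0" unfolding c_def using n k k0 by (simp add: field_simps)
  have nd: "real n = real d + 1" "Suc d = n" using n by (auto simp: d_def)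
  have pos: "\<And>x. \<pi> x \<ge> 0" and out: "\<And>x. x \<notin> states n \<Longrightarrow> \<pi> x = 0"
    and tot: "(\<pi> has_sum 1) (states n)"
    and bal: "\<And>y. y \<in> states n \<Longrightarrow> ((\<lambda>x. \<pi> x * trans_prob n k x y) has_sum \<pi> y) (states n)"
    using assms(7) unfolding stationary_def by auto
  have finA: "\<And>j. finite (A j)" unfolding A_def by (rule finite_A)
  have finB: "finite (B M)" for M
  proof -
    have "B M \<subseteq> A M" unfolding A_def B_def by auto
    then show ?thesis using finA[of M] by (rule finite_subset)
  qed
  have st1: "((\<lambda>x. \<pi> x * (of_bool (S x < j) + c * of_bool (R x \<and> j \<le> S x \<and> S x \<le> j + d))) has_sum (\<Sum>y\<in>A j. \<pi> y)) (states n)" for j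
  proof -
    have "((\<lambda>x. \<Sum>y\<in>A j. \<pi> x * trans_prob n k x y) has_sum (\<Sum>y\<in>A j. \<pi> y)) (states n)"
      by (rule has_sum_sum_fin[OF finA]) (use bal in \<open>auto simp: A_def\<close>)
    then have "((\<lambda>x. \<pi> x * (\<Sum>y\<in>A j. trans_prob n k x y)) has_sum (\<Sum>y\<in>A j. \<pi> y)) (states n)"
      by (simp add: sum_distrib_left)
    then show ?thesis
      by (subst has_sum_cong[where g = "\<lambda>x. \<pi> x * (\<Sum>y\<in>A j. trans_prob n k x y)"])
         (auto simp: PA[OF n k] A_def c_def S_def R_def d_def)
  qed
  have st2: "((\<lambda>x. \<pi> x * of_bool (S x \<le> j)) has_sum (\<Sum>y\<in>A j. \<pi> y)) (states n)" for j
  proof -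
    have "(\<pi> has_sum (\<Sum>y\<in>A j. \<pi> y)) (A j)" using finA by simp
    then show ?thesis
      by (subst (asm) has_sum_cong_neutral[where f = \<pi> and S = "A j" and T = "states n" and g = "\<lambda>x. \<pi> x * of_bool (S x \<le> j)"]) (auto simp: A_def S_def)
  qed
  define g where "g = (\<lambda>j x. \<pi> x * of_bool (S x = j) - c * (\<pi> x * of_bool (R x \<and> j \<le> S x \<and> S x \<le> j + d)))"
  have st3: "(g j has_sum 0) (states n)" for j
  proof -
    have "((\<lambda>x. \<pi> x * of_bool (S x \<le> j) + (-1) * (\<pi> x * (of_bool (S x < j) + c * of_bool (R x \<and> j \<le> S x \<and> S x \<le> j + d)))) has_sum ((\<Sum>y\<in>A j. \<pi> y) + (-1) * (\<Sum>y\<in>A j. \<pi> y))) (states n)"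
      by (intro has_sum_add st2 has_sum_cmult_right st1)
    moreover have "\<pi> x * of_bool (S x \<le> j) + (-1) * (\<pi> x * (of_bool (S x < j) + c * of_bool (R x \<and> j \<le> S x \<and> S x \<le> j + d))) = g j x" for x
      unfolding g_def by (cases "S x < j"; cases "S x = j") (auto simp: algebra_simps)
    ultimately show ?thesis by simp
  qed
  have st4: "((\<lambda>x. \<pi> x * of_bool (S x < M) - c * (\<pi> x * of_bool (R x) * real (wM d M (S x)))) has_sum 0) (states n)" for M
  proof -
    have "((\<lambda>x. \<Sum>j<M. g j x) has_sum (\<Sum>j<M. 0)) (states n)"
      by (rule has_sum_sum_fin) (auto intro: st3)
    moreover have "(\<Sum>j<M. g j x) = \<pi> x * of_bool (S x < M) - c * (\<pi> x * of_bool (R x) * real (wM d M (S x)))" for x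
    proof -
      have "(\<Sum>j<M. g j x) = \<pi> x * (\<Sum>j<M. of_bool (S x = j)) - c * (\<pi> x * (\<Sum>j<M. of_bool (R x \<and> j \<le> S x \<and> S x \<le> j + d)))"
        unfolding g_def by (simp add: sum_subtractf flip: sum_distrib_left)
      then show ?thesis by (simp only: sum_ofbool_eq sum_ofbool_w mult.assoc)
    qed
    ultimately show ?thesis by simp
  qed
  have sa: "((\<lambda>x. \<pi> x * of_bool (S x < M)) has_sum T M) (states n)" for M
  proof -
    have "(\<pi> has_sum T M) (B M)" using finB unfolding T_def by simp
    then show ?thesis
      by (subst (asm) has_sum_cong_neutral[where f = \<pi> and S = "B M" and T = "states n" and g = "\<lambda>x. \<pi> x * of_bool (S x < M)"]) (auto simp: B_def S_def)
  qed
  have sb: "((\<lambda>x. c * (\<pi> x * of_bool (R x) * real (wM d M (S x)))) has_sum T M) (states n)" for M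
  proof -
    have "((\<lambda>x. \<pi> x * of_bool (S x < M) + (-1) * (\<pi> x * of_bool (S x < M) - c * (\<pi> x * of_bool (R x) * real (wM d M (S x))))) has_sum (T M + (-1) * 0)) (states n)"
      by (intro has_sum_add sa has_sum_cmult_right st4)
    then show ?thesis by simp
  qed
  have sc: "((\<lambda>x. \<pi> x * of_bool (R x)) has_sum p) (states n)"
  proof -
    have "\<pi> summable_on states n" using tot by (rule has_sum_imp_summable)
    then have "\<pi> summable_on region n 0" by (rule summable_on_subset) (auto simp: region_def)
    then have "(\<pi> has_sum p) (region n 0)" unfolding p_def by simp
    then show ?thesis
      by (subst (asm) has_sum_cong_neutral[where f = \<pi> and S = "region n 0" and T = "states n" and g = "\<lambda>x. \<pi> x * of_bool (R x)"]) (auto simp: region_def R_def)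
  qed
  have sd: "((\<lambda>x. \<pi> x * of_bool (\<not> S x < M)) has_sum (1 - T M)) (states n)" for M
  proof -
    have "((\<lambda>x. \<pi> x + (-1) * (\<pi> x * of_bool (S x < M))) has_sum (1 + (-1) * T M)) (states n)"
      by (intro has_sum_add tot has_sum_cmult_right sa)
    moreover have "\<pi> x + (-1) * (\<pi> x * of_bool (S x < M)) = \<pi> x * of_bool (\<not> S x < M)" for x
      by (cases "S x < M") auto
    ultimately show ?thesis by simp
  qed
  have Rge: "R x \<Longrightarrow> d \<le> S x" for x using Ssum_dn[of n x] by (simp add: R_def S_def d_def)
  have e1: "T M \<le> c * real n * p" for M
  proof (rule has_sum_mono[OF sb has_sum_cmult_right[OF sc]])
    fix x
    have "real (wM d M (S x)) \<le> real n" using wM_le[of d M "S x"] nd by simp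
    then have "\<pi> x * of_bool (R x) * real (wM d M (S x)) \<le> \<pi> x * of_bool (R x) * real n"
      using pos[of x] by (intro mult_left_mono) auto
    then show "c * (\<pi> x * of_bool (R x) * real (wM d M (S x))) \<le> c * real n * (\<pi> x * of_bool (R x))"
      using c0 by (simp add: mult_left_mono algebra_simps)
  qed
  have e2: "c * real n * p - T M \<le> c * real n * (1 - T M)" for M
  proof -
    have h: "((\<lambda>x. c * real n * (\<pi> x * of_bool (R x)) + (-1) * (c * (\<pi> x * of_bool (R x) * real (wM d M (S x))))) has_sum (c * real n * p + (-1) * T M)) (states n)"
      by (intro has_sum_add has_sum_cmult_right sc sb)
    show ?thesis
    proof -
      have "c * real n * p + (-1) * T M \<le> c * real n * (1 - T M)"
      proof (rule has_sum_mono[OF h has_sum_cmult_right[OF sd]])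
        fix x
        have w: "real (wM d M (S x)) \<le> real n" using wM_le[of d M "S x"] nd by simp
        show "c * real n * (\<pi> x * of_bool (R x)) + (-1) * (c * (\<pi> x * of_bool (R x) * real (wM d M (S x)))) \<le> c * real n * (\<pi> x * of_bool (\<not> S x < M))"
        proof (cases "R x")
          case False then show ?thesis using pos[of x] c0 by simp
        next
          case True
          show ?thesis
          proof (cases "S x < M")
            case True
            then have "real (wM d M (S x)) = real n" using wM_eq[OF Rge[OF \<open>R x\<close>] True] nd by simp
            then show ?thesis using True \<open>R x\<close> by simp
          next
            case False
            have "c * (\<pi> x * real (wM d M (S x))) \<ge> 0" using c0 pos[of x] by simp
            then show ?thesis using False \<open>R x\<close> by (simp add: algebra_simps)
          qed
        qed
      qed
      then show ?thesis by simp
    qed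
  qed
  have Tle: "T M \<le> 1" for M
    by (rule has_sum_mono[OF sa tot]) (use pos in \<open>simp add: mult_left_le\<close>)
  have Tconv: "\<exists>M. T M \<ge> 1 - \<epsilon>" if eps: "\<epsilon> > 0" for \<epsilon>
  proof -
    obtain F where F: "finite F" "F \<subseteq> states n" "dist (sum \<pi> F) 1 \<le> \<epsilon>"
      using has_sum_finite_approximation[OF tot eps] by blast
    define M where "M = (\<Sum>x\<in>F. S x) + 1"
    have "F \<subseteq> B M"
    proof
      fix x assume "x \<in> F"
      then have "S x \<le> (\<Sum>x\<in>F. S x)" using F(1) by (intro member_le_sum) auto
      then show "x \<in> B M" using \<open>x \<in> F\<close> F(2) by (auto simp: B_def M_def S_def)
    qed
    then have "sum \<pi> F \<le> T M" unfolding T_def using finB pos by (intro sum_mono2) auto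
    moreover have "sum \<pi> F \<ge> 1 - \<epsilon>" using F(3) by (simp add: dist_real_def abs_if split: if_splits)
    ultimately show ?thesis by (intro exI[of _ M]) simp
  qed
  have cn0: "c * real n > 0" using c0 n by simp
  have key: "c * real n * p = 1"
  proof (rule ccontr)
    assume ne: "c * real n * p \<noteq> 1"
    show False
    proof (cases "c * real n * p < 1")
      case True
      obtain M where "T M \<ge> 1 - (1 - c * real n * p) / 2" using Tconv[of "(1 - c * real n * p) / 2"] True by auto
      then show False using e1[of M] True by (simp add: field_simps)
    next
      case False
      then have gt: "c * real n * p > 1" using ne by simp
      define \<epsilon> where "\<epsilon> = (c * real n * p - 1) / (2 * (c * real n))"
      have ep: "\<epsilon> > 0" unfolding \<epsilon>_def using gt cn0 by simp
      obtain M where M: "T M \<ge> 1 - \<epsilon>" using Tconv[OF ep] by auto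
      have "c * real n * (1 - T M) \<le> c * real n * \<epsilon>" using M cn0 by (intro mult_left_mono) auto
      also have "\<dots> = (c * real n * p - 1) / 2" unfolding \<epsilon>_def using c0 n by (simp add: field_simps)
      finally show False using e2[of M] Tle[of M] gt by (rule aux_contra)
    qed
  qed
  have "(real k - (real n - 1)) * p = real k / real n"
    using key k0 n unfolding c_def by (simp add: field_simps)
  then show ?thesis unfolding p_def by (simp add: mult.assoc)
qed

end
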